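(* Let $n\ge1$, $X=\{1,\dots,n\}$, $\mathcal{A}$ the algebra of all functions $X\to\mathbb{R}$ with pointwise operations, $\sigma:X\to X$ a bijection and $\tilde{\sigma}(f)=f\circ\sigma^{-1}$. The centralizer of $\mathcal{A}$ in the skew power series ring $\mathcal{A}[[x;\tilde{\sigma}]]$ is $$C(\mathcal{A})=\Big\{\sum_{n=0}^{\infty} f_nx^n : f_n\in\mathcal{A},\ f_n=0\text{ on } Sep^n(X)\text{ for all } n\ge0\Big\}.$$
   Context: The skew power series ring $\mathcal{A}[[x;\tilde{\sigma}]]$ is the set of formal series $\sum_{n=0}^\infty f_nx^n$, $f_n\in\mathcal{A}$, with coefficientwise addition and multiplication $\big(\sum_n f_nx^n\big)\big(\sum_n g_nx^n\big)=\sum_{n}\big(\sum_{k=0}^n f_k\,\tilde{\sigma}^k(g_{n-k})\big)x^n$ (so $xf=\tilde{\sigma}(f)x$). For an integer $n$, $Sep^n(X)=\{p\in X:\sigma^n(p)\neq p\}$ (so $Sep^0(X)=\emptyset$). *)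

theory Defs
  imports Complex_Main
begin

definition sigma_tilde :: "('x \<Rightarrow> 'x) \<Rightarrow> ('x \<Rightarrow> real) \<Rightarrow> ('x \<Rightarrow> real)" where
  "sigma_tilde s f = f \<circ> inv s"

text \<open>Skew power series sum_n f_n x^n represented by the coefficient sequence.\<close>
type_synonym 'x skew_series = "nat \<Rightarrow> ('x \<Rightarrow> real)"

definition skew_mult :: "('x \<Rightarrow> 'x) \<Rightarrow> 'x skew_series \<Rightarrow> 'x skew_series \<Rightarrow> 'x skew_series" where
  "skew_mult s F G = (\<lambda>n. \<lambda>p. \<Sum>k\<in>{0..n}. F k p * ((sigma_tilde s ^^ k) (G (n - k))) p)"

definition const_series :: "('x \<Rightarrow> real) \<Rightarrow> 'x skew_series" where
  "const_series f = (\<lambda>n. if n = 0 then f else (\<lambda>_. 0))"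

definition skew_centralizer :: "('x \<Rightarrow> 'x) \<Rightarrow> 'x skew_series set" where
  "skew_centralizer s = {F. \<forall>f. skew_mult s F (const_series f) = skew_mult s (const_series f) F}"

definition Sep :: "('x \<Rightarrow> 'x) \<Rightarrow> nat \<Rightarrow> 'x set" where
  "Sep s n = {p. (s ^^ n) p \<noteq> p}"

end

theory Submission
  imports Defs
begin

lemma st_pow: "(sigma_tilde s ^^ k) g = g \<circ> (inv s ^^ k)"
proof (induction k)
  case (Suc k)
  have "(sigma_tilde s ^^ Suc k) g = sigma_tilde s ((sigma_tilde s ^^ k) g)" by simp
  also have "\<dots> = ((sigma_tilde s ^^ k) g) \<circ> inv s" by (simp only: sigma_tilde_def)
  also have "\<dots> = g \<circ> ((inv s ^^ k) \<circ> inv s)" by (simp only: Suc.IH comp_assoc)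
  also have "(inv s ^^ k) \<circ> inv s = inv s ^^ Suc k" by (simp only: funpow_Suc_right)
  finally show ?case .
qed simp

lemma mult_const_right: "skew_mult s F (const_series f) n p = F n p * f ((inv s ^^ n) p)"
proof -
  have "skew_mult s F (const_series f) n p = (\<Sum>k\<in>{0..n}. if k = n then F n p * f ((inv s ^^ n) p) else 0)"
    unfolding skew_mult_def by (intro sum.cong) (auto simp: st_pow const_series_def)
  thus ?thesis by simp
qed

lemma mult_const_left: "skew_mult s (const_series f) F n p = f p * F n p"
proof -
  have "skew_mult s (const_series f) F n p = (\<Sum>k\<in>{0..n}. if k = 0 then f p * F n p else 0)"
    unfolding skew_mult_def by (intro sum.cong) (auto simp: const_series_def)
  thus ?thesis by simp
qed

lemma inv_pow_fix:
  assumes "bij \<sigma>"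
  shows "(inv \<sigma> ^^ n) p = p \<longleftrightarrow> (\<sigma> ^^ n) p = p"
proof -
  have a: "(\<sigma> ^^ n) ((inv \<sigma> ^^ n) q) = q" for q
  proof (induction n arbitrary: q)
    case (Suc n)
    have "(\<sigma> ^^ Suc n) ((inv \<sigma> ^^ Suc n) q) = \<sigma> ((\<sigma> ^^ n) ((inv \<sigma> ^^ n) (inv \<sigma> q)))"
      by (subst funpow.simps(2), subst funpow_Suc_right, simp only: comp_apply)
    also have "\<dots> = q" using assms Suc[of "inv \<sigma> q"] by (simp add: bij_is_surj surj_f_inv_f)
    finally show ?case .
  qed simp
  have inj: "inj (\<sigma> ^^ n)" using assms by (simp add: bij_is_inj inj_fn)
  show ?thesis
  proof
    assume "(inv \<sigma> ^^ n) p = p" then show "(\<sigma> ^^ n) p = p" using a[of p] by simp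
  next
    assume "(\<sigma> ^^ n) p = p"
    then have "(\<sigma> ^^ n) ((inv \<sigma> ^^ n) p) = (\<sigma> ^^ n) p" using a[of p] by simp
    then show "(inv \<sigma> ^^ n) p = p" using inj by (meson injD)
  qed
qed

theorem theorem10:
  fixes \<sigma> :: "'x::finite \<Rightarrow> 'x"
  assumes "bij \<sigma>"
  shows "skew_centralizer \<sigma> = {F. \<forall>n. \<forall>p \<in> Sep \<sigma> n. F n p = 0}"
proof -
  have "F \<in> skew_centralizer \<sigma> \<longleftrightarrow> (\<forall>n. \<forall>p \<in> Sep \<sigma> n. F n p = 0)" for F
  proof
    assume F: "F \<in> skew_centralizer \<sigma>"
    show "\<forall>n. \<forall>p \<in> Sep \<sigma> n. F n p = 0"
    proof (intro allI ballI)
      fix n p assume p: "p \<in> Sep \<sigma> n"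
      define f where "f = (\<lambda>q. if q = p then (1::real) else 0)"
      have "skew_mult \<sigma> F (const_series f) n p = skew_mult \<sigma> (const_series f) F n p"
        using F unfolding skew_centralizer_def by simp
      hence "F n p * f ((inv \<sigma> ^^ n) p) = f p * F n p"
        by (simp add: mult_const_right mult_const_left)
      moreover have "(inv \<sigma> ^^ n) p \<noteq> p" using p inv_pow_fix[OF assms] by (simp add: Sep_def)
      ultimately show "F n p = 0" by (simp add: f_def)
    qed
  next
    assume H: "\<forall>n. \<forall>p \<in> Sep \<sigma> n. F n p = 0"
    show "F \<in> skew_centralizer \<sigma>"
      unfolding skew_centralizer_def
    proof (intro CollectI allI ext)
      fix f n p
      show "skew_mult \<sigma> F (const_series f) n p = skew_mult \<sigma> (const_series f) F n p"
      proof (cases "p \<in> Sep \<sigma> n")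
        case True then show ?thesis using H by (simp add: mult_const_right mult_const_left)
      next
        case False
        then have "(inv \<sigma> ^^ n) p = p" using inv_pow_fix[OF assms] by (simp add: Sep_def)
        then show ?thesis by (simp add: mult_const_right mult_const_left)
      qed
    qed
  qed
  thus ?thesis by blast
qed

end
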